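(* Fix an integer $r\ge1$ and let $I_r(y)=\sup_{\xi\in\mathbb{R}}\left(y\xi-\varphi^r(\xi)\right)$ for $y\in[0,2^{-r}]$. Then: (1) as $\eta\to0^+$, \[ I_r(\eta)=2\eta\log\left(4^r\eta\sqrt{\Psi^r(0)\prod_{k=1}^{r}\Psi^k(0)}\right)-\log\Psi^r(0)-2\eta+O(\eta^2); \] (2) as $\eta\to0^+$, \[ I_r\left(\frac{1}{2^r}-\eta\right)=2^r\eta\log\left(2^{\,r-1+2^{1-r}}\eta\right)+(2-2^{1-r})\log 2-2^r\eta+O(\eta^2). \] In particular $I_r(0)=-\log\Psi^r(0)$ and $I_r(2^{-r})=(2-2^{1-r})\log 2$.
   Context: $\varphi(\xi)=\frac{\xi}{4}+\log\cosh\frac{\xi}{4}$ for $\xi\in\mathbb{R}$, and $\varphi^r$ is its $r$-fold composition. For $X\in[0,\infty)$, $\Psi(X)=\frac{\sqrt{X}+1}{2}$, and $\Psi^k$ denotes the $k$-fold composition of $\Psi$. ($I_r$ is the rate function in the large deviation principle for $S_{r+1,n}/n$, the normalized number of Strahler-order-$(r+1)$ branches in a uniformly random planar full binary tree with $n$ leaves.) *)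

theory Defs
  imports "HOL-Analysis.Analysis" "HOL-Library.Landau_Symbols"
begin

definition phi :: "real \<Rightarrow> real" where
  "phi \<xi> = \<xi> / 4 + ln (cosh (\<xi> / 4))"

definition Psi :: "real \<Rightarrow> real" where
  "Psi X = (sqrt X + 1) / 2"

definition I :: "nat \<Rightarrow> real \<Rightarrow> real" where
  "I r y = (SUP \<xi>\<in>(UNIV::real set). y * \<xi> - (phi ^^ r) \<xi>)"

end

theory Submission
  imports Defs "HOL-Real_Asymp.Real_Asymp"
begin

lemma exp_phi: "exp (phi x) = Psi (exp x)"
proof -
  have c: "cosh (x/4) > 0" by (simp add: cosh_real_pos)
  have s: "sqrt (exp x) = exp (x/2)"
  proof -
    have "exp x = (exp (x/2))^2" by (simp add: power2_eq_square exp_add[symmetric])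
    thus ?thesis by simp
  qed
  have "exp (phi x) = exp (x/4) * cosh (x/4)"
    unfolding phi_def using c by (simp add: exp_add)
  also have "\<dots> = (exp (x/4) * exp (x/4) + exp (x/4) * exp (-(x/4))) / 2"
    by (simp add: cosh_field_def field_simps)
  also have "\<dots> = (exp (x/2) + 1) / 2"
    by (simp add: exp_add[symmetric] exp_minus_inverse)
  finally show ?thesis unfolding Psi_def s by simp
qed

lemma exp_phi_pow: "exp ((phi^^k) x) = (Psi^^k) (exp x)"
  by (induction k) (simp_all add: exp_phi)

lemma Psi_ge: "0 \<le> x \<Longrightarrow> Psi x \<ge> 1/2"
  unfolding Psi_def by simp

lemma Psi_pow_nonneg: "0 \<le> x \<Longrightarrow> (Psi^^k) x \<ge> 0"
  by (induction k) (auto intro: order_trans[OF _ Psi_ge])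

lemma Psi_pow_ge: "0 \<le> x \<Longrightarrow> k \<ge> 1 \<Longrightarrow> (Psi^^k) x \<ge> 1/2"
proof (cases k)
  case (Suc m)
  assume "0 \<le> x"
  hence "(Psi^^m) x \<ge> 0" by (rule Psi_pow_nonneg)
  hence "Psi ((Psi^^m) x) \<ge> 1/2" by (rule Psi_ge)
  thus ?thesis using Suc by simp
qed simp

lemma Psi_pow_mono: "0 \<le> x \<Longrightarrow> x \<le> y \<Longrightarrow> (Psi^^k) x \<le> (Psi^^k) y"
  by (induction k) (auto simp: Psi_def)

lemma sqrt_taylor:
  fixes x c :: real
  assumes "0 \<le> x" "0 < c"
  shows "\<bar>sqrt x - sqrt c - (x - c) / (2 * sqrt c)\<bar> \<le> (x - c)^2 / (2 * c * sqrt c)"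
proof -
  define a where "a = sqrt x"
  define b where "b = sqrt c"
  have a0: "a \<ge> 0" and b0: "b > 0" using assms by (auto simp: a_def b_def)
  have x: "x = a^2" and cc: "c = b^2" using assms by (auto simp: a_def b_def)
  have "sqrt x - sqrt c - (x - c) / (2 * sqrt c) = -((a - b)^2 / (2*b))"
    unfolding x cc using a0 b0 by (simp add: field_simps power2_eq_square)
  hence "\<bar>sqrt x - sqrt c - (x - c) / (2 * sqrt c)\<bar> = (a - b)^2 / (2*b)"
    using b0 by simp
  also have "\<dots> \<le> (a - b)^2 * (a+b)^2 / (2*b^3)"
  proof -
    have "b^2 \<le> (a+b)^2" using a0 b0 by (intro power_mono) auto
    hence "(a - b)^2 * b^2 \<le> (a - b)^2 * (a+b)^2" by (intro mult_left_mono) auto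
    hence "(a - b)^2 * b^2 / (2*b^3) \<le> (a - b)^2 * (a+b)^2 / (2*b^3)"
      by (rule divide_right_mono) (use b0 in simp)
    moreover have "(a - b)^2 / (2*b) = (a - b)^2 * b^2 / (2*b^3)"
      using b0 by (simp add: power2_eq_square power3_eq_cube)
    ultimately show ?thesis by simp
  qed
  also have "\<dots> = (x - c)^2 / (2 * c * sqrt c)"
    unfolding x cc using a0 b0 by (simp add: field_simps power2_eq_square power3_eq_cube)
  finally show ?thesis .
qed

lemma sqrt_lip:
  fixes x c :: real
  assumes "0 \<le> x" "0 < c"
  shows "\<bar>sqrt x - sqrt c\<bar> \<le> \<bar>x - c\<bar> / sqrt c"
proof -
  have "x - c = (sqrt x - sqrt c) * (sqrt x + sqrt c)"
    using assms by (simp add: algebra_simps flip: power2_eq_square)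
  hence "\<bar>x - c\<bar> = \<bar>sqrt x - sqrt c\<bar> * (sqrt x + sqrt c)"
    using assms by (simp add: abs_mult)
  moreover have "sqrt x + sqrt c \<ge> sqrt c" using assms by simp
  ultimately have "\<bar>sqrt x - sqrt c\<bar> * sqrt c \<le> \<bar>x - c\<bar>"
    by (metis abs_ge_zero mult_left_mono)
  thus ?thesis using assms by (simp add: field_simps)
qed

lemma ln_lower: "0 \<le> (y::real) \<Longrightarrow> y - y^2 \<le> ln (1 + y)"
proof (cases "y \<le> 1")
  case True
  assume "0 \<le> y" thus ?thesis using ln_one_plus_pos_lower_bound True by blast
next
  case False
  assume "0 \<le> y"
  have "y - y^2 = y * (1 - y)" by (simp add: power2_eq_square algebra_simps)
  also have "\<dots> \<le> 0" using False by (simp add: mult_nonneg_nonpos)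
  also have "0 \<le> ln (1 + y)" using \<open>0 \<le> y\<close> by simp
  finally show ?thesis .
qed

lemma ln_taylor:
  fixes x c d M t :: real
  assumes c: "c > 0" and xc: "x \<ge> c" and e: "\<bar>x - c - d*t\<bar> \<le> M*t^2"
    and t: "0 \<le> t" "t \<le> 1" and d: "d \<ge> 0" and M: "M \<ge> 0"
  shows "\<bar>ln x - ln c - (d/c)*t\<bar> \<le> (M/c + ((d+M)/c)^2) * t^2"
proof -
  define y where "y = (x - c)/c"
  have y0: "y \<ge> 0" using c xc by (simp add: y_def)
  have lx: "ln x = ln c + ln (1 + y)"
  proof -
    have "1 + y = x / c" using c by (simp add: y_def field_simps)
    thus ?thesis using c xc by (simp add: ln_div)
  qed
  have u: "ln (1 + y) \<le> y" using y0 by (rule ln_add_one_self_le_self)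
  have l: "y - y^2 \<le> ln (1 + y)" using y0 by (rule ln_lower)
  have ydt: "\<bar>y - (d/c)*t\<bar> \<le> M*t^2/c"
  proof -
    have "y - (d/c)*t = (x - c - d*t)/c" using c by (simp add: y_def field_simps)
    hence "\<bar>y - (d/c)*t\<bar> = \<bar>x - c - d*t\<bar>/c" using c by simp
    thus ?thesis using e c by (simp add: divide_right_mono)
  qed
  have "t^2 \<le> t" using t by (simp add: power2_eq_square mult_left_le)
  hence "x - c \<le> (d + M) * t" using e t M by (simp add: algebra_simps abs_le_iff) (smt (verit) mult_left_mono)
  hence "y \<le> (d+M)*t/c" unfolding y_def using c by (intro divide_right_mono) auto
  hence "y \<le> ((d+M)/c) * t" by simp
  hence "y^2 \<le> (((d+M)/c) * t)^2" using y0 by (intro power_mono) auto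
  hence y2: "y^2 \<le> ((d+M)/c)^2 * t^2" by (simp add: power_mult_distrib power_divide)
  have "(M/c + ((d+M)/c)^2) * t^2 = M*t^2/c + ((d+M)/c)^2 * t^2" by (simp add: algebra_simps)
  moreover have "((d+M)/c)^2 * t^2 \<ge> 0" by simp
  moreover have "M*t^2/c \<ge> 0" using M c by simp
  moreover have "ln x - ln c - (d/c)*t = ln (1 + y) - y + (y - (d/c)*t)" using lx by simp
  ultimately show ?thesis using u l ydt y2 unfolding abs_le_iff by linarith
qed

lemma p_growth: "1 \<le> t \<Longrightarrow> ln ((Psi^^k) (t^2)) \<ge> 2 * ln t / 2^k - ln 4"
proof (induction k)
  case 0
  thus ?case by (simp add: ln_realpow)
next
  case (Suc k)
  have pos: "(Psi^^k) (t^2) > 0"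
  proof (cases k)
    case 0 thus ?thesis using Suc by simp
  next
    case (Suc m) thus ?thesis using Psi_pow_ge[of "t^2" k] by simp
  qed
  have "ln ((Psi^^Suc k) (t^2)) = ln ((sqrt ((Psi^^k) (t^2)) + 1)/2)" by (simp add: Psi_def)
  also have "\<dots> \<ge> ln (sqrt ((Psi^^k) (t^2)) / 2)" proof -
    have "sqrt ((Psi^^k) (t^2)) > 0" using pos by simp
    thus ?thesis by (intro ln_mono) auto
  qed
  also have "ln (sqrt ((Psi^^k) (t^2)) / 2) = ln ((Psi^^k) (t^2)) / 2 - ln 2"
    using pos by (simp add: ln_div ln_sqrt)
  finally have "ln ((Psi^^Suc k) (t^2)) \<ge> ln ((Psi^^k) (t^2)) / 2 - ln 2" .
  moreover have "ln (4::real) = 2 * ln 2"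
    using ln_realpow[of 2 2] by simp
  moreover have "2 * ln t / 2^Suc k = (2 * ln t / 2^k) / 2" by simp
  moreover have "2 * ln t / 2 ^ k - ln 4 \<le> ln ((Psi ^^ k) (t\<^sup>2))" using Suc by blast
  ultimately show ?case by argo
qed

fun dd :: "nat \<Rightarrow> real" where
  "dd 0 = 1/2"
| "dd (Suc k) = dd k / (4 * sqrt ((Psi^^Suc k) 0))"

lemma dd_pos: "dd k > 0"
proof (induction k)
  case (Suc k)
  have "(Psi^^Suc k) 0 \<ge> 1/2" by (rule Psi_pow_ge) auto
  thus ?case using Suc by simp
qed simp

lemma p_taylor: "\<exists>M\<ge>0. \<forall>t. 0 \<le> t \<longrightarrow> t \<le> 1 \<longrightarrow>
   \<bar>(Psi^^Suc k) (t^2) - (Psi^^Suc k) 0 - dd k * t\<bar> \<le> M * t^2"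
proof (induction k)
  case 0
  show ?case by (rule exI[of _ 0]) (auto simp: Psi_def add_divide_distrib)
next
  case (Suc k)
  then obtain M :: real where M: "M \<ge> 0" and HM: "\<And>t. 0 \<le> t \<Longrightarrow> t \<le> 1 \<Longrightarrow>
     \<bar>(Psi^^Suc k) (t^2) - (Psi^^Suc k) 0 - dd k * t\<bar> \<le> M * t^2" by blast
  define c :: real where "c = (Psi^^Suc k) 0"
  define d :: real where "d = dd k"
  have c: "c \<ge> 1/2" unfolding c_def by (rule Psi_pow_ge) auto
  have d: "d > 0" unfolding d_def by (rule dd_pos)
  have sc: "sqrt c > 0" using c by simp
  define Mn :: real where "Mn = ((d+M)^2/(2*c * sqrt c) + M/(2 * sqrt c))/2"
  show ?case
  proof (intro exI[of _ Mn] conjI allI impI)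
    show "Mn \<ge> 0" unfolding Mn_def using M c sc by (intro divide_nonneg_pos add_nonneg_nonneg) auto
    fix t :: real assume t: "0 \<le> t" "t \<le> 1"
    define x where "x = (Psi^^Suc k) (t^2)"
    have x0: "x \<ge> 0" unfolding x_def by (rule Psi_pow_nonneg) simp
    have e: "\<bar>x - c - d*t\<bar> \<le> M*t^2" using HM[OF t] by (simp add: x_def c_def d_def)
    have "t^2 \<le> t" using t by (simp add: power2_eq_square mult_left_le)
    hence "M*t^2 \<le> M*t" using M by (rule mult_left_mono)
    moreover have "d*t \<ge> 0" using d t by simp
    ultimately have "\<bar>x - c\<bar> \<le> (d + M) * t" using e unfolding abs_le_iff by (simp add: algebra_simps)
    hence "(x - c)^2 \<le> ((d+M)*t)^2" by (metis abs_ge_zero power2_abs power_mono)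
    hence xc2: "(x - c)^2 / (2*c * sqrt c) \<le> (d+M)^2*t^2 / (2*c * sqrt c)"
      using c sc by (intro divide_right_mono) (auto simp: power_mult_distrib)
    have st: "\<bar>sqrt x - sqrt c - (x - c) / (2 * sqrt c)\<bar> \<le> (x - c)^2 / (2 * c * sqrt c)"
      using x0 c by (intro sqrt_taylor) auto
    have e2: "\<bar>(x - c) / (2 * sqrt c) - d*t/(2 * sqrt c)\<bar> \<le> M*t^2/(2 * sqrt c)"
    proof -
      have "(x - c) / (2 * sqrt c) - d*t/(2 * sqrt c) = (x - c - d*t)/(2 * sqrt c)" by (simp add: diff_divide_distrib)
      hence "\<bar>(x - c) / (2 * sqrt c) - d*t/(2 * sqrt c)\<bar> = \<bar>x - c - d*t\<bar>/(2 * sqrt c)" using sc by simp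
      thus ?thesis using e sc by (simp add: divide_right_mono)
    qed
    have eq: "(Psi^^Suc (Suc k)) (t^2) - (Psi^^Suc (Suc k)) 0 - dd (Suc k) * t
        = ((sqrt x - sqrt c - (x - c) / (2 * sqrt c)) + ((x - c) / (2 * sqrt c) - d*t/(2 * sqrt c)))/2"
    proof -
      have sc': "sqrt c \<noteq> 0" using sc by simp
      have step: "\<And>y. (Psi^^Suc (Suc k)) y = Psi ((Psi^^Suc k) y)" by simp
      have "(Psi^^Suc (Suc k)) (t^2) - (Psi^^Suc (Suc k)) 0 - dd (Suc k) * t
          = (sqrt x + 1)/2 - (sqrt c + 1)/2 - d / (4 * sqrt c) * t"
        unfolding step by (simp add: Psi_def x_def c_def d_def)
      also have "\<dots> = ((sqrt x - sqrt c - (x - c) / (2 * sqrt c)) + ((x - c) / (2 * sqrt c) - d*t/(2 * sqrt c)))/2"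
        using sc' by (simp add: field_simps)
      finally show ?thesis .
    qed
    have "\<bar>((sqrt x - sqrt c - (x - c) / (2 * sqrt c)) + ((x - c) / (2 * sqrt c) - d*t/(2 * sqrt c)))/2\<bar>
        \<le> ((d+M)^2*t^2 / (2*c * sqrt c) + M*t^2/(2 * sqrt c))/2"
      using st e2 xc2 by (simp add: abs_le_iff)
    also have "\<dots> = Mn * t^2" by (simp add: Mn_def field_simps)
    finally have fin: "\<bar>((sqrt x - sqrt c - (x - c) / (2 * sqrt c)) + ((x - c) / (2 * sqrt c) - d*t/(2 * sqrt c)))/2\<bar> \<le> Mn * t^2" .
    show "\<bar>(Psi^^Suc (Suc k)) (t^2) - (Psi^^Suc (Suc k)) 0 - dd (Suc k) * t\<bar> \<le> Mn * t^2"
      unfolding eq by (rule fin)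
  qed
qed

fun q :: "nat \<Rightarrow> real \<Rightarrow> real" where
  "q 0 u = 1"
| "q (Suc k) u = (sqrt (q k (u^2)) + u)/2"

lemma q_pos: "0 \<le> u \<Longrightarrow> q k u > 0"
  by (induction k arbitrary: u) (auto intro: add_pos_nonneg)

lemma q_mono: "0 \<le> u \<Longrightarrow> u \<le> v \<Longrightarrow> q k u \<le> q k v"
proof (induction k arbitrary: u v)
  case (Suc k)
  have "u^2 \<le> v^2" using Suc.prems by (intro power_mono) auto
  hence "q k (u^2) \<le> q k (v^2)" using Suc.IH[of "u^2" "v^2"] by simp
  hence "sqrt (q k (u^2)) \<le> sqrt (q k (v^2))" by (rule real_sqrt_le_mono)
  thus ?case using Suc.prems by (simp only: q.simps) (intro divide_right_mono add_mono, auto)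
qed simp

lemma q_ge: "0 \<le> u \<Longrightarrow> q (Suc k) u \<ge> u/2"
  using q_pos[of "u^2" k] by simp

lemma Psi_Suc: "(Psi^^Suc k) X = (sqrt ((Psi^^k) X) + 1)/2"
  by (simp add: Psi_def)

lemma q_Psi: "0 < u \<Longrightarrow> q k u = u * (Psi^^k) (1 / u^(2^k))"
proof (induction k arbitrary: u)
  case 0 thus ?case by simp
next
  case (Suc k)
  have u2: "u^2 > 0" using Suc.prems by simp
  have "q (Suc k) u = (sqrt (u^2 * (Psi^^k) (1 / (u^2)^(2^k))) + u)/2"
    using Suc.IH[OF u2] by simp
  also have "(u^2)^(2^k) = u^(2^Suc k)" by (simp add: power_mult[symmetric] mult.commute)
  also have "sqrt (u^2 * (Psi^^k) (1 / u^(2^Suc k))) = u * sqrt ((Psi^^k) (1 / u^(2^Suc k)))"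
    using Suc.prems by (simp add: real_sqrt_mult)
  finally show ?case by (simp only: Psi_Suc) (simp add: field_simps)
qed

lemma q0: "q k 0 = 2 powr (-(2 - 2 powr (1 - real k)))"
proof (induction k)
  case 0 thus ?case by simp
next
  case (Suc k)
  have "q (Suc k) 0 = sqrt (2 powr (-(2 - 2 powr (1 - real k)))) / 2" using Suc by simp
  also have "sqrt (2 powr (-(2 - 2 powr (1 - real k)))) = 2 powr ((-(2 - 2 powr (1 - real k)))/2)"
    by (simp add: powr_half_sqrt[symmetric] powr_powr)
  also have "2 powr ((-(2 - 2 powr (1 - real k)))/2) / 2 = 2 powr ((-(2 - 2 powr (1 - real k)))/2 - 1)"
    by (simp add: powr_diff)
  also have "(-(2 - 2 powr (1 - real k)))/2 - 1 = -(2 - 2 powr (1 - real (Suc k)))"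
  proof -
    have "2 powr (1 - real k) = 2 * 2 powr (1 - real (Suc k))"
      by (simp add: powr_diff powr_minus_divide)
    thus ?thesis by (simp add: field_simps)
  qed
  finally show ?case .
qed

lemma q_lip: "\<exists>M\<ge>0. \<forall>u. 0 \<le> u \<longrightarrow> u \<le> 1 \<longrightarrow> \<bar>q k u - q k 0\<bar> \<le> M * u"
proof (induction k)
  case 0 show ?case by (rule exI[of _ 0]) simp
next
  case (Suc k)
  then obtain M :: real where M: "M \<ge> 0" and HM: "\<And>u. 0 \<le> u \<Longrightarrow> u \<le> 1 \<Longrightarrow> \<bar>q k u - q k 0\<bar> \<le> M * u"
    by blast
  define c where "c = q k 0"
  have c: "c > 0" unfolding c_def by (rule q_pos) simp
  show ?case
  proof (intro exI[of _ "(M / sqrt c + 1)/2"] conjI allI impI)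
    show "(M / sqrt c + 1)/2 \<ge> 0" using M c by simp
    fix u :: real assume u: "0 \<le> u" "u \<le> 1"
    have u2: "0 \<le> u^2" "u^2 \<le> 1" using u by (auto simp: power_le_one)
    have "\<bar>sqrt (q k (u^2)) - sqrt c\<bar> \<le> \<bar>q k (u^2) - c\<bar> / sqrt c"
      using q_pos[of "u^2" k] c by (intro sqrt_lip) auto
    also have "\<dots> \<le> M * u^2 / sqrt c" using HM[OF u2] c by (simp add: c_def divide_right_mono)
    also have "\<dots> \<le> M * u / sqrt c"
    proof -
      have "u^2 \<le> u" using u by (simp add: power2_eq_square mult_left_le)
      hence "M * u^2 \<le> M * u" using M by (rule mult_left_mono)
      thus ?thesis using c by (simp add: divide_right_mono)
    qed
    finally have "\<bar>sqrt (q k (u^2)) - sqrt c\<bar> \<le> M * u / sqrt c" .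
    moreover have eq: "q (Suc k) u - q (Suc k) 0 = ((sqrt (q k (u^2)) - sqrt c) + u)/2" by (simp add: c_def diff_divide_distrib)
    moreover have eq2: "(M / sqrt c + 1)/2 * u = (M * u / sqrt c + u)/2" by (simp add: field_simps)
    ultimately show "\<bar>q (Suc k) u - q (Suc k) 0\<bar> \<le> (M / sqrt c + 1)/2 * u"
      using u unfolding eq eq2 abs_le_iff by argo
  qed
qed

lemma q_taylor: "\<exists>M\<ge>0. \<forall>u. 0 \<le> u \<longrightarrow> u \<le> 1 \<longrightarrow> \<bar>q (Suc k) u - q (Suc k) 0 - (1/2) * u\<bar> \<le> M * u^2"
proof -
  obtain M :: real where M: "M \<ge> 0" and HM: "\<And>u. 0 \<le> u \<Longrightarrow> u \<le> 1 \<Longrightarrow> \<bar>q k u - q k 0\<bar> \<le> M * u"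
    using q_lip[of k] by blast
  define c where "c = q k 0"
  have c: "c > 0" unfolding c_def by (rule q_pos) simp
  show ?thesis
  proof (intro exI[of _ "M / sqrt c / 2"] conjI allI impI)
    show "M / sqrt c / 2 \<ge> 0" using M c by simp
    fix u :: real assume u: "0 \<le> u" "u \<le> 1"
    have u2: "0 \<le> u^2" "u^2 \<le> 1" using u by (auto simp: power_le_one)
    have "\<bar>sqrt (q k (u^2)) - sqrt c\<bar> \<le> \<bar>q k (u^2) - c\<bar> / sqrt c"
      using q_pos[of "u^2" k] c by (intro sqrt_lip) auto
    also have "\<dots> \<le> M * u^2 / sqrt c" using HM[OF u2] c by (simp add: c_def divide_right_mono)
    finally have "\<bar>sqrt (q k (u^2)) - sqrt c\<bar> \<le> M * u^2 / sqrt c" .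
    moreover have eq: "q (Suc k) u - q (Suc k) 0 - (1/2) * u = (sqrt (q k (u^2)) - sqrt c)/2" by (simp add: c_def field_simps)
    moreover have eq2: "M / sqrt c / 2 * u^2 = (M * u^2 / sqrt c)/2" by simp
    ultimately show "\<bar>q (Suc k) u - q (Suc k) 0 - (1/2) * u\<bar> \<le> M / sqrt c / 2 * u^2"
      unfolding eq eq2 abs_le_iff by argo
  qed
qed

lemma key1:
  fixes s b t :: real
  assumes "s > 0" "b > 0" "t > 0"
  shows "s * ln t - b*t \<le> s * ln (s/b) - s"
proof -
  have "ln (b*t/s) \<le> b*t/s - 1" using assms by (intro ln_le_minus_one) auto
  moreover have "ln (b*t/s) = ln t - ln (s/b)" using assms by (simp add: ln_div ln_mult)
  ultimately have "ln t - ln (s/b) \<le> b*t/s - 1" by simp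
  hence "s * (ln t - ln (s/b)) \<le> s * (b*t/s - 1)" using assms by (intro mult_left_mono) auto
  thus ?thesis using assms by (simp add: algebra_simps)
qed

lemma lnw: "(w::real) \<ge> 8 \<Longrightarrow> ln w \<le> w/2 - 1"
proof -
  assume w: "w \<ge> 8"
  have "ln (w/4) \<le> w/4 - 1" using w by (intro ln_le_minus_one) auto
  moreover have "ln (w/4) = ln w - ln 4" using w by (simp add: ln_div)
  moreover have "ln (4::real) = 2 * ln 2" using ln_realpow[of 2 2] by simp
  moreover have "ln (2::real) < 1" by (rule ln_2_less_1)
  ultimately show ?thesis using w by linarith
qed

lemma ev_less: "(c::real) > 0 \<Longrightarrow> \<forall>\<^sub>F s in at_right 0. s < c"
  using order_tendstoD(2)[OF tendsto_ident_at[of 0 "{0<..}"]] by blast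

lemma legendre_asymp:
  fixes F :: "real \<Rightarrow> real" and a0 a1 K \<beta> C :: real
  assumes a1: "a1 > 0" and K: "K \<ge> 0" and \<beta>: "\<beta> > 0"
    and tay: "\<And>t. 0 \<le> t \<Longrightarrow> t \<le> 1 \<Longrightarrow> \<bar>F t - a0 - a1*t\<bar> \<le> K*t^2"
    and mono: "\<And>s t. 0 \<le> s \<Longrightarrow> s \<le> t \<Longrightarrow> F s \<le> F t"
    and gro: "\<And>t. 1 \<le> t \<Longrightarrow> F t \<ge> \<beta> * ln t - C"
  shows "\<exists>M. \<forall>\<^sub>F s in at_right 0. (\<forall>t>0. s * ln t - F t \<le> s * ln (s/a1) - s - a0 + M * s^2)
            \<and> (\<exists>t>0. s * ln t - F t \<ge> s * ln (s/a1) - s - a0 - M * s^2)"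
proof -
  define K' where "K' = K + 1"
  have K': "K' > 0" using K by (simp add: K'_def)
  have tay': "\<bar>F t - a0 - a1*t\<bar> \<le> K'*t^2" if "0 \<le> t" "t \<le> 1" for t
  proof -
    have "K*t^2 \<le> K'*t^2" by (simp add: K'_def algebra_simps)
    thus ?thesis using tay[OF that] by linarith
  qed
  define \<delta> where "\<delta> = min 1 (a1/(2*K'))"
  have \<delta>0: "\<delta> > 0" "\<delta> \<le> 1" using a1 K' by (auto simp: \<delta>_def)
  have K\<delta>: "K' * \<delta> \<le> a1/2"
  proof -
    have "\<delta> \<le> a1/(2*K')" by (simp add: \<delta>_def)
    hence "K' * \<delta> \<le> K' * (a1/(2*K'))" using K' by (intro mult_left_mono) auto
    thus ?thesis using K' by simp
  qed
  define \<epsilon> where "\<epsilon> = a1 * \<delta> / 4"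
  have \<epsilon>: "\<epsilon> > 0" using a1 \<delta>0 by (simp add: \<epsilon>_def)
  have F\<delta>: "F \<delta> \<ge> a0 + 2*\<epsilon>"
  proof -
    have "F \<delta> \<ge> a0 + a1*\<delta> - K'*\<delta>^2" using tay'[of \<delta>] \<delta>0 by (simp add: abs_le_iff)
    moreover have "K'*\<delta>^2 = (K'*\<delta>)*\<delta>" by (simp add: power2_eq_square)
    moreover have "(K'*\<delta>)*\<delta> \<le> (a1/2)*\<delta>" using K\<delta> \<delta>0 by (intro mult_right_mono) auto
    ultimately show ?thesis unfolding \<epsilon>_def by linarith
  qed
  define N where "N = 8*K'/a1"
  have N: "N > 0" using K' a1 by (simp add: N_def)
  define M where "M = 2*N/a1 + K'/a1^2"
  define B where "B = \<bar>C\<bar> + \<bar>a0\<bar> + 2*\<epsilon> + 1"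
  have B: "B > 0" using \<epsilon> by (simp add: B_def add_nonneg_pos)
  have lim: "((\<lambda>s. s * ln (s / a1) - s) \<longlongrightarrow> 0) (at_right 0)"
    using a1 by real_asymp
  have ev: "\<forall>\<^sub>F s in at_right 0. s > 0 \<and> s < a1^2/(16*K') \<and> s < a1 \<and> s < \<beta>
      \<and> s < \<epsilon>*\<beta>/B \<and> s * ln (s / a1) - s > -\<epsilon>"
  proof -
    have e1: "\<forall>\<^sub>F s in at_right 0. s > (0::real)" by (simp add: eventually_at_right_less)
    have e2: "\<forall>\<^sub>F s in at_right 0. s < a1^2/(16*K')" using a1 K' by (intro ev_less) simp
    have e3: "\<forall>\<^sub>F s in at_right 0. s < a1" using a1 by (intro ev_less)
    have e4: "\<forall>\<^sub>F s in at_right 0. s < \<beta>" using \<beta> by (intro ev_less)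
    have e5: "\<forall>\<^sub>F s in at_right 0. s < \<epsilon>*\<beta>/B" using \<epsilon> \<beta> B by (intro ev_less) simp
    have e6: "\<forall>\<^sub>F s in at_right 0. s * ln (s / a1) - s > -\<epsilon>"
      using order_tendstoD(1)[OF lim, of "-\<epsilon>"] \<epsilon> by simp
    show ?thesis by (intro eventually_conj e1 e2 e3 e4 e5 e6)
  qed
  show ?thesis
  proof (intro exI[of _ M] eventually_mono[OF ev])
    fix s :: real
    assume H: "s > 0 \<and> s < a1^2/(16*K') \<and> s < a1 \<and> s < \<beta> \<and> s < \<epsilon>*\<beta>/B \<and> s * ln (s / a1) - s > -\<epsilon>"
    hence s: "s > 0" and s1: "s < a1^2/(16*K')" and s2: "s < a1" and s3: "s < \<beta>"
      and s4: "s < \<epsilon>*\<beta>/B" and s5: "s * ln (s / a1) - s > -\<epsilon>" by auto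
    define T where "T = s * ln (s/a1) - s - a0"
    have Msplit: "M * s^2 = 2*N/a1 * s^2 + K'/a1^2 * s^2" by (simp add: M_def algebra_simps)
    have p1: "2*N/a1 * s^2 \<ge> 0" using N a1 by simp
    have p2: "K'/a1^2 * s^2 \<ge> 0" using K' by simp
    have Ms: "M * s^2 \<ge> 0" using Msplit p1 p2 by linarith
    have NsM: "2*N/a1 * s^2 \<le> M * s^2" using Msplit p2 by linarith
    have NsA: "N * s \<le> a1/2"
    proof -
      have "N * s \<le> N * (a1^2/(16*K'))" using s1 N by (intro mult_left_mono) auto
      also have "\<dots> = a1/2" using a1 K' by (simp add: N_def power2_eq_square)
      finally show ?thesis .
    qed
    have up: "\<forall>t>0. s * ln t - F t \<le> T + M * s^2"
    proof (intro allI impI)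
      fix t :: real assume t: "t > 0"
      show "s * ln t - F t \<le> T + M * s^2"
      proof (cases "t \<le> \<delta>")
        case tle: True
        have t1: "t \<le> 1" using tle \<delta>0 by simp
        have Ft: "F t \<ge> a0 + a1*t - K'*t^2" using tay'[of t] t t1 by (simp add: abs_le_iff)
        show ?thesis
        proof (cases "K' * t \<le> N * s")
          case True
          define b where "b = a1 - N * s"
          have b: "b \<ge> a1/2" using NsA by (simp add: b_def)
          have bpos: "b > 0" using b a1 by simp
          have "K'*t^2 \<le> N * s*t" using True t by (simp add: power2_eq_square mult_right_mono)
          hence "s * ln t - F t \<le> s * ln t - b*t - a0" using Ft by (simp add: b_def algebra_simps)
          also have "\<dots> \<le> s * ln (s/b) - s - a0" using key1[OF s bpos t] by simp
          also have "s * ln (s/b) = s * ln (s/a1) + s * ln (a1/b)"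
            using s a1 bpos by (simp add: ln_div algebra_simps)
          also have "s * ln (a1/b) \<le> 2*N/a1 * s^2"
          proof -
            have "ln (a1/b) \<le> a1/b - 1" using a1 bpos by (intro ln_le_minus_one) auto
            also have "a1/b - 1 = N * s/b" using bpos by (simp add: b_def field_simps)
            also have "N * s/b \<le> N * s/(a1/2)" using b N s a1 by (intro divide_left_mono) auto
            finally have "ln (a1/b) \<le> 2*N * s/a1" by (simp add: algebra_simps)
            hence "s * ln (a1/b) \<le> s * (2*N * s/a1)" using s by (intro mult_left_mono) auto
            thus ?thesis by (simp add: power2_eq_square algebra_simps)
          qed
          finally show ?thesis using NsM by (simp add: T_def)
        next
          case False
          have "K'*t^2 \<le> (a1/2)*t"
          proof -
            have "K'*t \<le> a1/2" using tle K\<delta> K' by (smt (verit) mult_left_mono)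
            thus ?thesis using t by (simp add: power2_eq_square mult_right_mono mult.assoc[symmetric])
          qed
          hence "s * ln t - F t \<le> s * ln t - (a1/2)*t - a0" using Ft by simp
          also have "s * ln t - (a1/2)*t \<le> s * ln (s/a1) - s"
          proof -
            define w where "w = a1*t/s"
            have "N * s < K'*t" using False by simp
            moreover have "N * s = K' * (8 * s/a1)" by (simp add: N_def)
            ultimately have "K' * (8 * s/a1) < K' * t" by simp
            hence "8 * s/a1 < t" using K' by (metis mult_less_cancel_left_pos)
            hence w8: "w \<ge> 8" using s a1 by (simp add: w_def field_simps)
            have "ln t = ln (s/a1) + ln w" using s a1 t by (simp add: w_def ln_div ln_mult)
            moreover have "(a1/2)*t = s*w/2" using s by (simp add: w_def)
            moreover have "s * ln w \<le> s * (w/2 - 1)" using lnw[OF w8] s by (intro mult_left_mono) auto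
            ultimately show ?thesis by (simp add: algebra_simps)
          qed
          finally show ?thesis using Ms by (simp add: T_def)
        qed
      next
        case tgt: False
        have Ft: "F t \<ge> a0 + 2*\<epsilon>" using F\<delta> mono[of \<delta> t] tgt \<delta>0 by simp
        have T\<epsilon>: "T \<ge> -a0 - \<epsilon>" using s5 by (simp add: T_def)
        show ?thesis
        proof (cases "t \<le> 1")
          case True
          have "s * ln t \<le> 0" using s t True by (simp add: mult_nonneg_nonpos)
          thus ?thesis using Ft T\<epsilon> Ms \<epsilon> by linarith
        next
          case False
          define lam where "lam = s/\<beta>"
          have lam: "0 \<le> lam" "lam \<le> 1" using s s3 \<beta> by (auto simp: lam_def)
          have "ln t \<le> (F t + C)/\<beta>" using gro[of t] False \<beta> by (simp add: field_simps)
          hence "s * ln t \<le> s * ((F t + C)/\<beta>)" using s by (intro mult_left_mono) auto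
          hence h1: "s * ln t \<le> lam * (F t + C)" by (simp add: lam_def)
          have h2: "(1 - lam) * (a0 + 2*\<epsilon>) \<le> (1 - lam) * F t" using lam Ft by (intro mult_left_mono) auto
          have h3: "lam * (C + a0 + 2*\<epsilon>) \<le> lam * B" using lam by (intro mult_left_mono) (auto simp: B_def)
          have h4: "lam * B \<le> \<epsilon>"
          proof -
            have "s * B < \<epsilon>*\<beta>" using s4 B by (simp add: pos_less_divide_eq)
            hence "s * B / \<beta> < \<epsilon>" using \<beta> by (simp add: pos_divide_less_eq)
            thus ?thesis by (simp add: lam_def)
          qed
          have "s * ln t - F t \<le> -a0 - 2*\<epsilon> + lam * (C + a0 + 2*\<epsilon>)"
            using h1 h2 by (simp add: algebra_simps)
          thus ?thesis using h3 h4 T\<epsilon> Ms by linarith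
        qed
      qed
    qed
    have lo: "\<exists>t>0. s * ln t - F t \<ge> T - M * s^2"
    proof (intro exI[of _ "s/a1"] conjI)
      show "s/a1 > 0" using s a1 by simp
      have t1: "s/a1 \<le> 1" using s2 a1 by simp
      have "F (s/a1) \<le> a0 + a1*(s/a1) + K'*(s/a1)^2" using tay'[of "s/a1"] s a1 t1 by (simp add: abs_le_iff)
      also have "\<dots> = a0 + s + K'/a1^2 * s^2" using a1 by (simp add: power_divide)
      finally have "F (s/a1) \<le> a0 + s + K'/a1^2 * s^2" .
      moreover have "K'/a1^2 * s^2 \<le> M * s^2" using Msplit p1 by linarith
      ultimately show "s * ln (s/a1) - F (s/a1) \<ge> T - M * s^2" by (simp add: T_def)
    qed
    show "(\<forall>t>0. s * ln t - F t \<le> s * ln (s/a1) - s - a0 + M * s^2)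
            \<and> (\<exists>t>0. s * ln t - F t \<ge> s * ln (s/a1) - s - a0 - M * s^2)"
      using up lo unfolding T_def by blast
  qed
qed


lemma sup_bounds:
  fixes h :: "real \<Rightarrow> real"
  assumes up: "\<forall>t>0. h t \<le> U" and lo: "\<exists>t>0. h t \<ge> L"
  shows "L \<le> (SUP t\<in>{0<..}. h t) \<and> (SUP t\<in>{0<..}. h t) \<le> U"
proof
  have bdd: "bdd_above (h ` {0<..})" using up by (auto intro!: bdd_aboveI2[of _ _ U])
  from lo obtain t where t: "t > 0" "h t \<ge> L" by blast
  show "L \<le> (SUP t\<in>{0<..}. h t)" using t bdd by (intro cSUP_upper2[of _ _ t]) auto
  show "(SUP t\<in>{0<..}. h t) \<le> U" using up by (intro cSUP_least) auto
qed

lemma endpoint: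
  fixes F :: "real \<Rightarrow> real" and a0 a1 K :: real
  assumes K: "K \<ge> 0" and a1: "a1 \<ge> 0"
    and tay: "\<And>t. 0 \<le> t \<Longrightarrow> t \<le> 1 \<Longrightarrow> \<bar>F t - a0 - a1*t\<bar> \<le> K*t^2"
    and mono: "\<And>s t. 0 \<le> s \<Longrightarrow> s \<le> t \<Longrightarrow> F s \<le> F t"
  shows "(SUP t\<in>{0<..}. - F t) = - a0"
proof -
  have F0: "F 0 = a0" using tay[of 0] by simp
  have up: "\<forall>t>0. - F t \<le> - a0" using mono[of 0] F0 by auto
  have bdd: "bdd_above ((\<lambda>t. - F t) ` {0<..})" using up by (auto intro!: bdd_aboveI2[of _ _ "-a0"])
  have le: "(SUP t\<in>{0<..}. - F t) \<le> - a0" using up by (intro cSUP_least) auto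
  have ge: "(SUP t\<in>{0<..}. - F t) \<ge> - a0"
  proof (rule ccontr)
    define S where "S = (SUP t\<in>{0<..}. - F t)"
    assume "\<not> (SUP t\<in>{0<..}. - F t) \<ge> - a0"
    hence e: "-a0 - S > 0" by (simp add: S_def)
    define t where "t = min 1 ((-a0 - S)/(2*(a1+K+1)))"
    have t: "t > 0" "t \<le> 1" using e a1 K by (auto simp: t_def)
    have "t^2 \<le> t" using t by (simp add: power2_eq_square mult_left_le)
    hence "K*t^2 \<le> K*t" using K by (rule mult_left_mono)
    hence "F t \<le> a0 + (a1+K)*t" using tay[of t] t by (simp add: abs_le_iff algebra_simps)
    moreover have "(a1+K)*t < -a0 - S"
    proof -
      have "(a1+K)*t \<le> (a1+K)*((-a0 - S)/(2*(a1+K+1)))" using a1 K by (intro mult_left_mono) (auto simp: t_def)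
      also have "\<dots> = (-a0 - S) * ((a1+K)/(2*(a1+K+1)))" by simp
      also have "\<dots> < (-a0 - S) * 1"
      proof (rule mult_strict_left_mono)
        show "(a1+K)/(2*(a1+K+1)) < 1" using a1 K by (simp add: divide_less_eq)
      qed (use e in simp)
      also have "\<dots> = -a0 - S" by simp
      finally show ?thesis .
    qed
    moreover have "- F t \<le> S" unfolding S_def using bdd t by (intro cSUP_upper) auto
    ultimately show False by linarith
  qed
  show ?thesis using le ge by linarith
qed

lemma exp_phi_ln: "(phi^^r) x = ln ((Psi^^r) (exp x))"
  by (metis exp_phi_pow ln_exp)

lemma exp2ln: "0 < (x::real) \<Longrightarrow> exp (2 * ln x) = x^2"
proof -
  assume x: "0 < x"
  have "ln (x^2) = 2 * ln x" using ln_realpow[of x 2] by simp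
  thus ?thesis using x by (metis exp_ln zero_less_power)
qed

lemma I_rep1: "I r y = (SUP t\<in>{0<..}. 2*y * ln t - ln ((Psi^^r) (t^2)))"
proof -
  have U: "UNIV = (\<lambda>t. 2 * ln t) ` ({0<..} :: real set)"
  proof -
    have "x \<in> (\<lambda>t. 2 * ln t) ` {0<..}" for x :: real
      by (rule image_eqI[of _ _ "exp (x/2)"]) auto
    thus ?thesis by blast
  qed
  show ?thesis unfolding I_def
    apply (subst U)
    apply (simp add: image_image)
    apply (rule SUP_cong, simp)
    apply (simp add: exp_phi_ln exp2ln)
    done
qed


lemma expnln: "0 < (u::real) \<Longrightarrow> exp (- (2^r * ln u)) = 1 / u^(2^r)"
proof -
  assume u: "0 < u"
  have "ln (u^(2^r)) = real (2^r) * ln u" by (rule ln_realpow)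
  hence "ln (u^(2^r)) = 2^r * ln u" by simp
  hence "exp (2^r * ln u) = u^(2^r)" using u by (metis exp_ln zero_less_power)
  thus ?thesis by (simp add: exp_minus field_simps)
qed

lemma I_rep2: "I r y = (SUP u\<in>{0<..}. (1 - 2^r*y) * ln u - ln (q r u))"
proof -
  have U: "UNIV = (\<lambda>u. - (2^r * ln u)) ` ({0<..} :: real set)"
  proof -
    have "x \<in> (\<lambda>u. - (2^r * ln u)) ` {0<..}" for x :: real
      by (rule image_eqI[of _ _ "exp (- x / 2^r)"]) auto
    thus ?thesis by blast
  qed
  have eq: "y * (- (2^r * ln u)) - (phi^^r) (- (2^r * ln u)) = (1 - 2^r*y) * ln u - ln (q r u)"
    if u: "u > 0" for u :: real
  proof -
    have qp: "q r u = u * (Psi^^r) (1 / u^(2^r))" using u by (rule q_Psi)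
    have "q r u > 0" using u by (intro q_pos) simp
    hence P: "(Psi^^r) (1 / u^(2^r)) > 0" using qp u by (simp add: zero_less_mult_iff)
    have "ln (q r u) = ln u + ln ((Psi^^r) (1 / u^(2^r)))" using qp u P by (simp add: ln_mult)
    moreover have "(phi^^r) (- (2^r * ln u)) = ln ((Psi^^r) (1 / u^(2^r)))"
      unfolding exp_phi_ln expnln[OF u] ..
    ultimately show ?thesis by (simp add: algebra_simps)
  qed
  show ?thesis unfolding I_def
    apply (subst U)
    unfolding image_image
    apply (rule SUP_cong[OF refl])
    apply (rule eq)
    apply simp
    done
qed


lemma dd_formula: "2 / dd k = 4^(Suc k) * sqrt (\<Prod>j=1..k. (Psi^^j) 0)"
proof (induction k)
  case 0 thus ?case by simp
next
  case (Suc k)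
  have c: "(Psi^^Suc k) 0 \<ge> 1/2" by (rule Psi_pow_ge) auto
  have "2 / dd (Suc k) = 4 * sqrt ((Psi^^Suc k) 0) * (2 / dd k)"
    using dd_pos[of k] c by (simp add: field_simps)
  also have "\<dots> = 4^(Suc (Suc k)) * (sqrt ((Psi^^Suc k) 0) * sqrt (\<Prod>j=1..k. (Psi^^j) 0))"
    using Suc by simp
  also have "sqrt ((Psi^^Suc k) 0) * sqrt (\<Prod>j=1..k. (Psi^^j) 0) = sqrt (\<Prod>j=1..Suc k. (Psi^^j) 0)"
    by (simp add: real_sqrt_mult[symmetric] prod.nat_ivl_Suc' mult.commute)
  finally show ?case .
qed

lemma ev_scale:
  assumes c: "(c::real) > 0" and ev: "\<forall>\<^sub>F s in at_right 0. P s"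
  shows "\<forall>\<^sub>F \<eta> in at_right 0. P (c * \<eta>)"
proof -
  from ev obtain b where b: "b > 0" "\<And>y. y > 0 \<Longrightarrow> y < b \<Longrightarrow> P y"
    unfolding eventually_at_right_field by auto
  show ?thesis unfolding eventually_at_right_field
  proof (intro exI[of _ "b/c"] conjI allI impI)
    show "b/c > 0" using b c by simp
    fix y :: real assume "y > 0" "y < b/c"
    thus "P (c*y)" using c by (intro b(2)) (auto simp: field_simps)
  qed
qed


theorem theorem4p5:
  fixes r :: nat
  assumes "r \<ge> 1"
  shows "(\<lambda>\<eta>. I r \<eta> -
            (2 * \<eta> * ln (4 ^ r * \<eta> * sqrt ((Psi ^^ r) 0 * (\<Prod>k=1..r. (Psi ^^ k) 0)))
             - ln ((Psi ^^ r) 0) - 2 * \<eta>))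
           \<in> O[at_right 0](\<lambda>\<eta>. \<eta> ^ 2) \<and>
         (\<lambda>\<eta>. I r (1 / 2 ^ r - \<eta>) -
            (2 ^ r * \<eta> * ln (2 powr (real r - 1 + 2 powr (1 - real r)) * \<eta>)
             + (2 - 2 powr (1 - real r)) * ln 2 - 2 ^ r * \<eta>))
           \<in> O[at_right 0](\<lambda>\<eta>. \<eta> ^ 2) \<and>
         I r 0 = - ln ((Psi ^^ r) 0) \<and>
         I r (1 / 2 ^ r) = (2 - 2 powr (1 - real r)) * ln 2"
proof -
  obtain k where rk: "r = Suc k" using assms by (cases r) auto
  define F where "F t = ln ((Psi^^r) (t^2))" for t :: real
  define c where "c = (Psi^^r) 0"
  define d where "d = dd k"
  have c: "c \<ge> 1/2" unfolding c_def using assms by (intro Psi_pow_ge) auto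
  have d: "d > 0" unfolding d_def by (rule dd_pos)
  obtain Mp where Mp: "Mp \<ge> 0" and HMp: "\<And>t. 0 \<le> t \<Longrightarrow> t \<le> 1 \<Longrightarrow>
      \<bar>(Psi^^r) (t^2) - c - d * t\<bar> \<le> Mp * t^2"
    using p_taylor[of k] unfolding rk c_def d_def by blast
  define K where "K = Mp/c + ((d+Mp)/c)^2"
  have K: "K \<ge> 0" using Mp c d by (simp add: K_def)
  have tayF: "\<bar>F t - ln c - (d/c)*t\<bar> \<le> K*t^2" if "0 \<le> t" "t \<le> 1" for t
    unfolding F_def K_def
  proof (rule ln_taylor)
    show "c > 0" using c by simp
    show "(Psi^^r) (t^2) \<ge> c" unfolding c_def by (rule Psi_pow_mono) auto
  qed (use HMp[OF that] that Mp d in auto)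
  have monoF: "F s \<le> F t" if "0 \<le> s" "s \<le> t" for s t
  proof -
    have "(Psi^^r) (s^2) \<ge> 1/2" using assms by (intro Psi_pow_ge) auto
    moreover have "(Psi^^r) (s^2) \<le> (Psi^^r) (t^2)" using that by (intro Psi_pow_mono power_mono) auto
    ultimately show ?thesis unfolding F_def by (intro ln_mono) auto
  qed
  have groF: "F t \<ge> (2/2^r) * ln t - ln 4" if "1 \<le> t" for t
    using p_growth[OF that, of r] unfolding F_def by simp
  obtain M1 where M1: "\<forall>\<^sub>F s in at_right 0. (\<forall>t>0. s * ln t - F t \<le> s * ln (s/(d/c)) - s - ln c + M1 * s^2)
            \<and> (\<exists>t>0. s * ln t - F t \<ge> s * ln (s/(d/c)) - s - ln c - M1 * s^2)"
    using legendre_asymp[of "d/c" K "2/2^r" F "ln c" "ln 4"] tayF monoF groF d c K by auto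
  have key1: "2 / (d/c) = 4 ^ r * sqrt (c * (\<Prod>k=1..r. (Psi ^^ k) 0))"
  proof -
    have "2 / (d/c) = c * (2 / d)" by simp
    also have "\<dots> = c * (4^r * sqrt (\<Prod>j=1..k. (Psi^^j) 0))" using dd_formula[of k] by (simp add: d_def rk)
    also have "c * (4^r * sqrt (\<Prod>j=1..k. (Psi^^j) 0)) = 4^r * sqrt (c * (c * (\<Prod>j=1..k. (Psi^^j) 0)))"
      using c by (simp add: real_sqrt_mult mult.assoc[symmetric])
    also have "c * (\<Prod>j=1..k. (Psi^^j) 0) = (\<Prod>j=1..r. (Psi^^j) 0)"
      by (simp add: rk c_def prod.nat_ivl_Suc' mult.commute)
    finally show ?thesis .
  qed
  have part1: "(\<lambda>\<eta>. I r \<eta> -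
            (2 * \<eta> * ln (4 ^ r * \<eta> * sqrt ((Psi ^^ r) 0 * (\<Prod>k=1..r. (Psi ^^ k) 0)))
             - ln ((Psi ^^ r) 0) - 2 * \<eta>))
           \<in> O[at_right 0](\<lambda>\<eta>. \<eta> ^ 2)"
  proof (rule bigoI[where c = "4*M1"])
    have ev2: "\<forall>\<^sub>F \<eta> in at_right 0. \<eta> > 0 \<and> ((\<forall>t>0. (2*\<eta>) * ln t - F t \<le> (2*\<eta>) * ln ((2*\<eta>)/(d/c)) - (2*\<eta>) - ln c + M1 * (2*\<eta>)^2)
            \<and> (\<exists>t>0. (2*\<eta>) * ln t - F t \<ge> (2*\<eta>) * ln ((2*\<eta>)/(d/c)) - (2*\<eta>) - ln c - M1 * (2*\<eta>)^2))"
      by (intro eventually_conj ev_scale[OF _ M1]) (auto simp: eventually_at_right_less)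
    show "\<forall>\<^sub>F \<eta> in at_right 0. norm (I r \<eta> -
            (2 * \<eta> * ln (4 ^ r * \<eta> * sqrt ((Psi ^^ r) 0 * (\<Prod>k=1..r. (Psi ^^ k) 0)))
             - ln ((Psi ^^ r) 0) - 2 * \<eta>)) \<le> 4*M1 * norm (\<eta>^2)"
    proof (rule eventually_mono[OF ev2], elim conjE)
      fix \<eta> :: real
      assume \<eta>: "\<eta> > 0"
        and up: "\<forall>t>0. (2*\<eta>) * ln t - F t \<le> (2*\<eta>) * ln ((2*\<eta>)/(d/c)) - (2*\<eta>) - ln c + M1 * (2*\<eta>)^2"
        and lo: "\<exists>t>0. (2*\<eta>) * ln t - F t \<ge> (2*\<eta>) * ln ((2*\<eta>)/(d/c)) - (2*\<eta>) - ln c - M1 * (2*\<eta>)^2"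
      have Irep: "I r \<eta> = (SUP t\<in>{0<..}. (2*\<eta>) * ln t - F t)" unfolding I_rep1 F_def ..
      have tgt: "(2*\<eta>)/(d/c) = 4 ^ r * \<eta> * sqrt ((Psi ^^ r) 0 * (\<Prod>k=1..r. (Psi ^^ k) 0))"
      proof -
        have "(2*\<eta>)/(d/c) = \<eta> * (2/(d/c))" by simp
        also have "\<dots> = 4 ^ r * \<eta> * sqrt ((Psi ^^ r) 0 * (\<Prod>k=1..r. (Psi ^^ k) 0))"
          unfolding key1 by (simp add: c_def ac_simps)
        finally show ?thesis .
      qed
      have that: "\<bar>I r \<eta> - ((2*\<eta>) * ln ((2*\<eta>)/(d/c)) - (2*\<eta>) - ln c)\<bar> \<le> M1 * (2*\<eta>)^2"
        using sup_bounds[OF up lo] unfolding Irep[symmetric] by (simp add: abs_le_iff)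
      show "norm (I r \<eta> -
            (2 * \<eta> * ln (4 ^ r * \<eta> * sqrt ((Psi ^^ r) 0 * (\<Prod>k=1..r. (Psi ^^ k) 0)))
             - ln ((Psi ^^ r) 0) - 2 * \<eta>)) \<le> 4*M1 * norm (\<eta>^2)"
      proof -
        have e1: "2 * \<eta> * ln (4 ^ r * \<eta> * sqrt ((Psi ^^ r) 0 * (\<Prod>k=1..r. (Psi ^^ k) 0)))
             - ln ((Psi ^^ r) 0) - 2 * \<eta> = (2*\<eta>) * ln ((2*\<eta>)/(d/c)) - (2*\<eta>) - ln c"
          unfolding tgt[symmetric] c_def by simp
        have e2: "M1 * (2*\<eta>)^2 = 4*M1 * norm (\<eta>^2)" by (simp add: power_mult_distrib)
        show ?thesis unfolding e1 e2[symmetric] using that by simp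
      qed
    qed
  qed
  have part3: "I r 0 = - ln ((Psi ^^ r) 0)"
  proof -
    have "I r 0 = (SUP t\<in>{0<..}. - F t)" unfolding I_rep1 F_def by simp
    also have "\<dots> = - ln c" using endpoint[of K "d/c" F "ln c"] K d c tayF monoF by auto
    finally show ?thesis by (simp add: c_def)
  qed
  define G where "G u = ln (q r u)" for u :: real
  define c2 where "c2 = q r 0"
  define e where "e = 2 powr (1 - real r)"
  have c2v: "c2 = 2 powr (-(2 - e))" unfolding c2_def e_def by (rule q0)
  have c2: "c2 > 0" unfolding c2_def by (rule q_pos) simp
  obtain Mq where Mq: "Mq \<ge> 0" and HMq: "\<And>u. 0 \<le> u \<Longrightarrow> u \<le> 1 \<Longrightarrow>
      \<bar>q r u - c2 - (1/2) * u\<bar> \<le> Mq * u^2"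
    using q_taylor[of k] unfolding rk c2_def by blast
  define K2 where "K2 = Mq/c2 + ((1/2+Mq)/c2)^2"
  have K2: "K2 \<ge> 0" using Mq c2 by (simp add: K2_def)
  have tayG: "\<bar>G u - ln c2 - ((1/2)/c2)*u\<bar> \<le> K2*u^2" if "0 \<le> u" "u \<le> 1" for u
    unfolding G_def K2_def
  proof (rule ln_taylor)
    show "c2 > 0" using c2 by simp
    show "q r u \<ge> c2" unfolding c2_def by (rule q_mono) (use that in auto)
  qed (use HMq[OF that] that Mq in auto)
  have monoG: "G s \<le> G t" if "0 \<le> s" "s \<le> t" for s t
  proof -
    have "q r s > 0" using that by (intro q_pos) auto
    moreover have "q r s \<le> q r t" using that by (intro q_mono) auto
    ultimately show ?thesis unfolding G_def by (intro ln_mono) auto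
  qed
  have groG: "G u \<ge> 1 * ln u - ln 2" if "1 \<le> u" for u
  proof -
    have "q r u \<ge> u/2" unfolding rk using that by (intro q_ge) auto
    hence "ln (q r u) \<ge> ln (u/2)" using that by (intro ln_mono) auto
    thus ?thesis using that by (simp add: G_def ln_div)
  qed
  obtain M2 where M2: "\<forall>\<^sub>F s in at_right 0. (\<forall>t>0. s * ln t - G t \<le> s * ln (s/((1/2)/c2)) - s - ln c2 + M2 * s^2)
            \<and> (\<exists>t>0. s * ln t - G t \<ge> s * ln (s/((1/2)/c2)) - s - ln c2 - M2 * s^2)"
    using legendre_asymp[of "(1/2)/c2" K2 1 G "ln c2" "ln 2"] tayG monoG groG c2 K2 by auto
  have lnc2: "ln c2 = - ((2 - e) * ln 2)" unfolding c2v by (simp add: ln_powr algebra_simps)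
  have pr: "(2::real)^r * 2 * c2 = 2 powr (real r - 1 + e)"
  proof -
    have "(2::real)^r = 2 powr real r" by (simp add: powr_realpow)
    hence "(2::real)^r * 2 * c2 = 2 powr real r * 2 powr 1 * 2 powr (-(2 - e))" unfolding c2v by simp
    also have "\<dots> = 2 powr (real r + 1 + (-(2 - e)))" by (simp only: powr_add)
    also have "real r + 1 + (-(2 - e)) = real r - 1 + e" by simp
    finally show ?thesis .
  qed
  have part2: "(\<lambda>\<eta>. I r (1 / 2 ^ r - \<eta>) -
            (2 ^ r * \<eta> * ln (2 powr (real r - 1 + 2 powr (1 - real r)) * \<eta>)
             + (2 - 2 powr (1 - real r)) * ln 2 - 2 ^ r * \<eta>))
           \<in> O[at_right 0](\<lambda>\<eta>. \<eta> ^ 2)"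
  proof (rule bigoI[where c = "4^r*M2"])
    have ev2: "\<forall>\<^sub>F \<eta> in at_right 0. \<eta> > 0 \<and> ((\<forall>t>0. (2^r*\<eta>) * ln t - G t \<le> (2^r*\<eta>) * ln ((2^r*\<eta>)/((1/2)/c2)) - (2^r*\<eta>) - ln c2 + M2 * (2^r*\<eta>)^2)
            \<and> (\<exists>t>0. (2^r*\<eta>) * ln t - G t \<ge> (2^r*\<eta>) * ln ((2^r*\<eta>)/((1/2)/c2)) - (2^r*\<eta>) - ln c2 - M2 * (2^r*\<eta>)^2))"
      by (intro eventually_conj ev_scale[OF _ M2]) (auto simp: eventually_at_right_less)
    show "\<forall>\<^sub>F \<eta> in at_right 0. norm (I r (1 / 2 ^ r - \<eta>) -
            (2 ^ r * \<eta> * ln (2 powr (real r - 1 + 2 powr (1 - real r)) * \<eta>)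
             + (2 - 2 powr (1 - real r)) * ln 2 - 2 ^ r * \<eta>)) \<le> 4^r*M2 * norm (\<eta>^2)"
    proof (rule eventually_mono[OF ev2], elim conjE)
      fix \<eta> :: real
      assume \<eta>: "\<eta> > 0"
        and up: "\<forall>t>0. (2^r*\<eta>) * ln t - G t \<le> (2^r*\<eta>) * ln ((2^r*\<eta>)/((1/2)/c2)) - (2^r*\<eta>) - ln c2 + M2 * (2^r*\<eta>)^2"
        and lo: "\<exists>t>0. (2^r*\<eta>) * ln t - G t \<ge> (2^r*\<eta>) * ln ((2^r*\<eta>)/((1/2)/c2)) - (2^r*\<eta>) - ln c2 - M2 * (2^r*\<eta>)^2"
      have co: "1 - 2^r * (1 / 2 ^ r - \<eta>) = (2::real)^r*\<eta>" by (simp add: field_simps)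
      have Irep: "I r (1 / 2 ^ r - \<eta>) = (SUP t\<in>{0<..}. (2^r*\<eta>) * ln t - G t)"
        unfolding I_rep2 co G_def ..
      have that: "\<bar>I r (1 / 2 ^ r - \<eta>) - ((2^r*\<eta>) * ln ((2^r*\<eta>)/((1/2)/c2)) - (2^r*\<eta>) - ln c2)\<bar> \<le> M2 * (2^r*\<eta>)^2"
        using sup_bounds[OF up lo] unfolding Irep[symmetric] by (simp add: abs_le_iff)
      have tgt: "(2^r*\<eta>)/((1/2)/c2) = 2 powr (real r - 1 + 2 powr (1 - real r)) * \<eta>"
      proof -
        have "(2^r*\<eta>)/((1/2)/c2) = (2^r * 2 * c2) * \<eta>" by simp
        also have "\<dots> = 2 powr (real r - 1 + 2 powr (1 - real r)) * \<eta>" unfolding pr e_def ..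
        finally show ?thesis .
      qed
      have e1: "2 ^ r * \<eta> * ln (2 powr (real r - 1 + 2 powr (1 - real r)) * \<eta>)
             + (2 - 2 powr (1 - real r)) * ln 2 - 2 ^ r * \<eta>
          = (2^r*\<eta>) * ln ((2^r*\<eta>)/((1/2)/c2)) - (2^r*\<eta>) - ln c2"
        unfolding tgt[symmetric] lnc2 e_def by simp
      have e2: "M2 * (2^r*\<eta>)^2 = 4^r*M2 * norm (\<eta>^2)"
      proof -
        have f: "(2::real)^r * 2^r = 4^r" using power_mult_distrib[of "2::real" 2 r] by simp
        show ?thesis by (simp add: power2_eq_square f[symmetric] algebra_simps)
      qed
      show "norm (I r (1 / 2 ^ r - \<eta>) -
            (2 ^ r * \<eta> * ln (2 powr (real r - 1 + 2 powr (1 - real r)) * \<eta>)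
             + (2 - 2 powr (1 - real r)) * ln 2 - 2 ^ r * \<eta>)) \<le> 4^r*M2 * norm (\<eta>^2)"
        unfolding e1 e2[symmetric] using that by simp
    qed
  qed
  have part4: "I r (1 / 2 ^ r) = (2 - 2 powr (1 - real r)) * ln 2"
  proof -
    have "I r (1 / 2 ^ r) = (SUP t\<in>{0<..}. - G t)" unfolding I_rep2 G_def by simp
    also have "\<dots> = - ln c2" using endpoint[of K2 "(1/2)/c2" G "ln c2"] K2 c2 tayG monoG by auto
    finally show ?thesis by (simp add: lnc2 e_def)
  qed
  show ?thesis using part1 part2 part3 part4 by blast
qed

end
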